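(* Let $A$ and $B$ be meet-semilattices such that, identifying $A$ with its image $\{{\downarrow}a : a\in A\}$ in $\mathcal{BL} A$, we have $A\subseteq B\subseteq \mathcal{BL} A$ with $A$ a sub-meet-semilattice of $B$ and $B$ a sub-meet-semilattice of $\mathcal{BL} A$. Then $\mathcal{BL} B\cong \mathcal{BL} A$.
   Context: A meet-semilattice is a poset in which all finite meets exist (so it has a top $1$ but need not have a bottom). For a meet-semilattice $A$, a subset $S\subseteq A$ whose join $\bigvee S$ exists in $A$ is called admissible (and $\bigvee S$ a distributive join) if for every $a\in A$ the join $\bigvee\{a\wedge s: s\in S\}$ exists and equals $a\wedge\bigvee S$. A downset $E$ of $A$ is a D-ideal if $\bigvee S\in E$ for every admissible $S\subseteq E$. The Bruns–Lakser completion $\mathcal{BL} A$ is the set of all D-ideals of $A$ ordered by inclusion; it is a frame, and $a\mapsto {\downarrow}a$ embeds $A$ as a join-dense sub-meet-semilattice of $\mathcal{BL} A$. *)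

theory Defs
  imports Main
begin

definition is_partial_order :: "'a set \<Rightarrow> ('a \<Rightarrow> 'a \<Rightarrow> bool) \<Rightarrow> bool" where
  "is_partial_order S le \<longleftrightarrow>
     (\<forall>x\<in>S. le x x) \<and>
     (\<forall>x\<in>S. \<forall>y\<in>S. le x y \<and> le y x \<longrightarrow> x = y) \<and>
     (\<forall>x\<in>S. \<forall>y\<in>S. \<forall>z\<in>S. le x y \<and> le y z \<longrightarrow> le x z)"

definition is_top :: "'a set \<Rightarrow> ('a \<Rightarrow> 'a \<Rightarrow> bool) \<Rightarrow> 'a \<Rightarrow> bool" where
  "is_top S le t \<longleftrightarrow> t \<in> S \<and> (\<forall>x\<in>S. le x t)"

definition is_glb :: "'a set \<Rightarrow> ('a \<Rightarrow> 'a \<Rightarrow> bool) \<Rightarrow> 'a \<Rightarrow> 'a \<Rightarrow> 'a \<Rightarrow> bool" where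
  "is_glb S le a b m \<longleftrightarrow> m \<in> S \<and> le m a \<and> le m b \<and>
     (\<forall>x\<in>S. le x a \<and> le x b \<longrightarrow> le x m)"

definition is_lub :: "'a set \<Rightarrow> ('a \<Rightarrow> 'a \<Rightarrow> bool) \<Rightarrow> 'a set \<Rightarrow> 'a \<Rightarrow> bool" where
  "is_lub S le X j \<longleftrightarrow> j \<in> S \<and> (\<forall>x\<in>X. le x j) \<and>
     (\<forall>y\<in>S. (\<forall>x\<in>X. le x y) \<longrightarrow> le j y)"

definition meet_semilattice :: "'a set \<Rightarrow> ('a \<Rightarrow> 'a \<Rightarrow> bool) \<Rightarrow> bool" where
  "meet_semilattice S le \<longleftrightarrow> is_partial_order S le \<and> (\<exists>t. is_top S le t) \<and>
     (\<forall>a\<in>S. \<forall>b\<in>S. \<exists>m. is_glb S le a b m)"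

definition sub_meet_semilattice :: "'a set \<Rightarrow> ('a \<Rightarrow> 'a \<Rightarrow> bool) \<Rightarrow> 'a set \<Rightarrow> bool" where
  "sub_meet_semilattice T le S \<longleftrightarrow> S \<subseteq> T \<and>
     (\<forall>t. is_top T le t \<longrightarrow> t \<in> S) \<and>
     (\<forall>x\<in>S. \<forall>y\<in>S. \<forall>m. is_glb T le x y m \<longrightarrow> m \<in> S)"

text \<open>Admissible subsets (whose join is distributive).\<close>
definition admissible :: "'a set \<Rightarrow> ('a \<Rightarrow> 'a \<Rightarrow> bool) \<Rightarrow> 'a set \<Rightarrow> bool" where
  "admissible S le X \<longleftrightarrow> X \<subseteq> S \<and> (\<exists>j. is_lub S le X j) \<and>
     (\<forall>a\<in>S. \<forall>j m. is_lub S le X j \<and> is_glb S le a j m \<longrightarrow>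
        is_lub S le {m'. \<exists>s\<in>X. is_glb S le a s m'} m)"

definition is_downset :: "'a set \<Rightarrow> ('a \<Rightarrow> 'a \<Rightarrow> bool) \<Rightarrow> 'a set \<Rightarrow> bool" where
  "is_downset S le E \<longleftrightarrow> E \<subseteq> S \<and> (\<forall>x\<in>S. \<forall>y\<in>E. le x y \<longrightarrow> x \<in> E)"

definition D_ideal :: "'a set \<Rightarrow> ('a \<Rightarrow> 'a \<Rightarrow> bool) \<Rightarrow> 'a set \<Rightarrow> bool" where
  "D_ideal S le E \<longleftrightarrow> is_downset S le E \<and>
     (\<forall>X j. X \<subseteq> E \<and> admissible S le X \<and> is_lub S le X j \<longrightarrow> j \<in> E)"

text \<open>Bruns--Lakser completion: the set of D-ideals (ordered by inclusion).\<close>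
definition BL :: "'a set \<Rightarrow> ('a \<Rightarrow> 'a \<Rightarrow> bool) \<Rightarrow> 'a set set" where
  "BL S le = {E. D_ideal S le E}"

definition principal :: "'a set \<Rightarrow> ('a \<Rightarrow> 'a \<Rightarrow> bool) \<Rightarrow> 'a \<Rightarrow> 'a set" where
  "principal S le a = {x\<in>S. le x a}"

definition order_isomorphic :: "'a set \<Rightarrow> ('a \<Rightarrow> 'a \<Rightarrow> bool) \<Rightarrow> 'b set \<Rightarrow> ('b \<Rightarrow> 'b \<Rightarrow> bool) \<Rightarrow> bool" where
  "order_isomorphic S le T le' \<longleftrightarrow>
     (\<exists>f. bij_betw f S T \<and> (\<forall>x\<in>S. \<forall>y\<in>S. le x y \<longleftrightarrow> le' (f x) (f y)))"

end

theory Submission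
  imports Defs
begin

lemma lub_sub_unique: "is_lub S (\<subseteq>) X j \<Longrightarrow> is_lub S (\<subseteq>) X j' \<Longrightarrow> j = j'"
  unfolding is_lub_def by (meson subset_antisym)

lemma glb_sub_unique: "is_glb S (\<subseteq>) a b m \<Longrightarrow> is_glb S (\<subseteq>) a b m' \<Longrightarrow> m = m'"
  unfolding is_glb_def by (meson subset_antisym)

locale BLsetup =
  fixes A :: "'a set" and le :: "'a \<Rightarrow> 'a \<Rightarrow> bool" and B :: "'a set set"
  assumes ms: "meet_semilattice A le"
    and sub1: "sub_meet_semilattice B (\<subseteq>) (principal A le ` A)"
    and sub2: "sub_meet_semilattice (BL A le) (\<subseteq>) B"
begin

abbreviation dn where "dn \<equiv> principal A le"

lemma po: "is_partial_order A le" using ms unfolding meet_semilattice_def by blast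

lemma po_refl: "x \<in> A \<Longrightarrow> le x x" using po unfolding is_partial_order_def by blast
lemma po_antisym: "x \<in> A \<Longrightarrow> y \<in> A \<Longrightarrow> le x y \<Longrightarrow> le y x \<Longrightarrow> x = y"
  using po unfolding is_partial_order_def by blast
lemma po_trans: "x \<in> A \<Longrightarrow> y \<in> A \<Longrightarrow> z \<in> A \<Longrightarrow> le x y \<Longrightarrow> le y z \<Longrightarrow> le x z"
  using po unfolding is_partial_order_def by blast

lemma glb_ex: "a \<in> A \<Longrightarrow> b \<in> A \<Longrightarrow> \<exists>m. is_glb A le a b m"
  using ms unfolding meet_semilattice_def by blast

lemma lub_unique: "is_lub A le X j \<Longrightarrow> is_lub A le X j' \<Longrightarrow> j = j'"
  unfolding is_lub_def by (meson po_antisym)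

lemma glb_unique: "is_glb A le a b m \<Longrightarrow> is_glb A le a b m' \<Longrightarrow> m = m'"
  unfolding is_glb_def by (meson po_antisym)

lemma B_sub: "B \<subseteq> BL A le" using sub2 unfolding sub_meet_semilattice_def by blast

lemma B_D: "b \<in> B \<Longrightarrow> D_ideal A le b" using B_sub unfolding BL_def by blast

lemma B_down: "b \<in> B \<Longrightarrow> z \<in> A \<Longrightarrow> y \<in> b \<Longrightarrow> le z y \<Longrightarrow> z \<in> b"
proof -
  assume "b \<in> B" "z \<in> A" "y \<in> b" "le z y"
  moreover have "is_downset A le b" using B_D[OF \<open>b \<in> B\<close>] unfolding D_ideal_def by blast
  ultimately show ?thesis unfolding is_downset_def by blast
qed

lemma B_subA: "b \<in> B \<Longrightarrow> b \<subseteq> A"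
proof -
  assume "b \<in> B"
  then have "is_downset A le b" using B_D unfolding D_ideal_def by blast
  then show ?thesis unfolding is_downset_def by blast
qed

lemma dn_B: "a \<in> A \<Longrightarrow> dn a \<in> B"
proof -
  assume a: "a \<in> A"
  have "principal A le ` A \<subseteq> B" using sub1 by (simp add: sub_meet_semilattice_def)
  moreover have "dn a \<in> principal A le ` A" using a by (rule imageI)
  ultimately show ?thesis by (rule subsetD)
qed

lemma dn_self: "a \<in> A \<Longrightarrow> a \<in> dn a" by (simp add: principal_def po_refl)

lemma dn_sub_iff: "a \<in> A \<Longrightarrow> b \<in> B \<Longrightarrow> dn a \<subseteq> b \<longleftrightarrow> a \<in> b"
proof -
  assume a: "a \<in> A" and b: "b \<in> B"
  show ?thesis
  proof
    assume "dn a \<subseteq> b" then show "a \<in> b" using dn_self[OF a] by (rule subsetD)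
  next
    assume ab: "a \<in> b"
    show "dn a \<subseteq> b"
    proof
      fix x assume "x \<in> dn a"
      then have "x \<in> A" "le x a" by (simp_all add: principal_def)
      then show "x \<in> b" using B_down[OF b _ ab] by blast
    qed
  qed
qed

lemma D_join0: "D_ideal A le I \<Longrightarrow> X \<subseteq> I \<Longrightarrow> admissible A le X \<Longrightarrow> is_lub A le X j \<Longrightarrow> j \<in> I"
  unfolding D_ideal_def by blast

lemma D_int: "D_ideal A le c \<Longrightarrow> D_ideal A le d \<Longrightarrow> D_ideal A le (c \<inter> d)"
proof -
  assume c: "D_ideal A le c" and d: "D_ideal A le d"
  have "is_downset A le c" "is_downset A le d" using c d unfolding D_ideal_def by simp_all
  then have dw: "is_downset A le (c \<inter> d)" unfolding is_downset_def by blast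
  show ?thesis unfolding D_ideal_def
  proof (intro conjI allI impI)
    show "is_downset A le (c \<inter> d)" by (rule dw)
    fix X j assume H: "X \<subseteq> c \<inter> d \<and> admissible A le X \<and> is_lub A le X j"
    then have "X \<subseteq> c" "X \<subseteq> d" by auto
    then show "j \<in> c \<inter> d" using D_join0[OF c] D_join0[OF d] H by blast
  qed
qed

lemma sub2_glb: "c \<in> B \<Longrightarrow> d \<in> B \<Longrightarrow> is_glb (BL A le) (\<subseteq>) c d m \<Longrightarrow> m \<in> B"
  using sub2 unfolding sub_meet_semilattice_def by blast

lemma B_int: "c \<in> B \<Longrightarrow> d \<in> B \<Longrightarrow> c \<inter> d \<in> B"
proof -
  assume c: "c \<in> B" and d: "d \<in> B"
  have "D_ideal A le c" "D_ideal A le d" using B_D c d by auto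
  then have "D_ideal A le (c \<inter> d)" by (rule D_int)
  then have "c \<inter> d \<in> BL A le" by (simp add: BL_def)
  then have "is_glb (BL A le) (\<subseteq>) c d (c \<inter> d)"
    unfolding is_glb_def by blast
  then show ?thesis using sub2_glb c d by blast
qed

lemma glb_B: "c \<in> B \<Longrightarrow> d \<in> B \<Longrightarrow> is_glb B (\<subseteq>) c d m \<longleftrightarrow> m = c \<inter> d"
proof -
  assume c: "c \<in> B" and d: "d \<in> B"
  have g: "is_glb B (\<subseteq>) c d (c \<inter> d)" using B_int[OF c d] unfolding is_glb_def by blast
  then show ?thesis using glb_sub_unique by blast
qed

lemma adm_T:
  assumes UA: "U \<subseteq> A" and downU: "\<forall>z\<in>A. \<forall>u\<in>U. le z u \<longrightarrow> z \<in> U"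
    and KA: "K \<subseteq> A" and downK: "\<forall>z\<in>A. \<forall>y\<in>K. le z y \<longrightarrow> z \<in> K"
    and lubT: "\<forall>y\<in>K. is_lub A le {z\<in>A. le z y \<and> z \<in> U} y"
    and x: "x \<in> K"
  shows "admissible A le {z\<in>A. le z x \<and> z \<in> U}"
  unfolding admissible_def
proof (intro conjI ballI allI impI)
  show "{z \<in> A. le z x \<and> z \<in> U} \<subseteq> A" by blast
  show "\<exists>j. is_lub A le {z \<in> A. le z x \<and> z \<in> U} j" using lubT x by blast
  fix a j m
  assume a: "a \<in> A" and jm: "is_lub A le {z \<in> A. le z x \<and> z \<in> U} j \<and> is_glb A le a j m"
  have "j = x" using lub_unique jm lubT x by blast
  then have m: "is_glb A le a x m" using jm by simp
  have xA: "x \<in> A" using x KA by blast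
  have mA: "m \<in> A" and mx: "le m x" and ma: "le m a" using m unfolding is_glb_def by auto
  have mK: "m \<in> K" using downK mA mx x by blast
  have eq: "{m'. \<exists>s\<in>{z \<in> A. le z x \<and> z \<in> U}. is_glb A le a s m'} = {z\<in>A. le z m \<and> z \<in> U}"
  proof (intro equalityI subsetI)
    fix m' assume "m' \<in> {m'. \<exists>s\<in>{z \<in> A. le z x \<and> z \<in> U}. is_glb A le a s m'}"
    then obtain s where s: "s \<in> A" "le s x" "s \<in> U" and g: "is_glb A le a s m'" by blast
    have m'A: "m' \<in> A" and "le m' s" "le m' a" using g unfolding is_glb_def by auto
    then have "le m' x" using po_trans s xA by blast
    then have "le m' m" using m m'A \<open>le m' a\<close> unfolding is_glb_def by blast
    moreover have "m' \<in> U" using downU m'A s \<open>le m' s\<close> by blast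
    ultimately show "m' \<in> {z\<in>A. le z m \<and> z \<in> U}" using m'A by blast
  next
    fix z assume z: "z \<in> {z\<in>A. le z m \<and> z \<in> U}"
    then have zA: "z \<in> A" and zm: "le z m" and zU: "z \<in> U" by auto
    have zx: "le z x" using po_trans zA mA xA zm mx by blast
    have za: "le z a" using po_trans zA mA a zm ma by blast
    have "is_glb A le a z z" using zA za po_refl[OF zA] unfolding is_glb_def by blast
    then show "z \<in> {m'. \<exists>s\<in>{z \<in> A. le z x \<and> z \<in> U}. is_glb A le a s m'}"
      using zA zx zU by blast
  qed
  show "is_lub A le {m'. \<exists>s\<in>{z \<in> A. le z x \<and> z \<in> U}. is_glb A le a s m'} m"
    unfolding eq using lubT mK by blast
qed

definition psi where "psi J = {a\<in>A. dn a \<in> J}"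
definition phi where "phi I = {b\<in>B. b \<subseteq> I}"

lemma BLB_down: "J \<in> BL B (\<subseteq>) \<Longrightarrow> x \<in> B \<Longrightarrow> y \<in> J \<Longrightarrow> x \<subseteq> y \<Longrightarrow> x \<in> J"
  unfolding BL_def D_ideal_def is_downset_def by blast
lemma BLB_sub: "J \<in> BL B (\<subseteq>) \<Longrightarrow> J \<subseteq> B"
  unfolding BL_def D_ideal_def is_downset_def by blast
lemma BLB_join: "J \<in> BL B (\<subseteq>) \<Longrightarrow> X \<subseteq> J \<Longrightarrow> admissible B (\<subseteq>) X \<Longrightarrow> is_lub B (\<subseteq>) X j \<Longrightarrow> j \<in> J"
  unfolding BL_def D_ideal_def by blast
lemma D_join: "D_ideal A le I \<Longrightarrow> X \<subseteq> I \<Longrightarrow> admissible A le X \<Longrightarrow> is_lub A le X j \<Longrightarrow> j \<in> I"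
  unfolding D_ideal_def by blast

lemma dn_mono: "x \<in> A \<Longrightarrow> y \<in> A \<Longrightarrow> le x y \<Longrightarrow> dn x \<subseteq> dn y"
proof -
  assume x: "x \<in> A" and y: "y \<in> A" and xy: "le x y"
  show ?thesis
  proof
    fix w assume "w \<in> dn x"
    then have w: "w \<in> A" and wx: "le w x" by (simp_all add: principal_def)
    have "le w y" using po_trans[OF w x y wx xy] .
    then show "w \<in> dn y" using w by (simp add: principal_def)
  qed
qed

lemma cap_lub:
  assumes S: "admissible A le S" and j: "is_lub A le S j" and c: "c \<in> B" and b: "b \<in> B"
    and ub: "\<forall>s\<in>S. c \<inter> dn s \<subseteq> b"
  shows "c \<inter> dn j \<subseteq> b"
proof
  fix x assume x: "x \<in> c \<inter> dn j"
  have SA: "S \<subseteq> A" using S unfolding admissible_def by blast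
  have jA: "j \<in> A" using j unfolding is_lub_def by blast
  define U where "U = c \<inter> (\<Union>s\<in>S. dn s)"
  define K where "K = c \<inter> dn j"
  have UA: "U \<subseteq> A" unfolding U_def using B_subA c by blast
  have downU: "\<forall>z\<in>A. \<forall>u\<in>U. le z u \<longrightarrow> z \<in> U"
  proof (intro ballI impI)
    fix z u assume z: "z \<in> A" and u: "u \<in> U" and zu: "le z u"
    then obtain s where s: "s \<in> S" and us: "u \<in> dn s" and uc: "u \<in> c" unfolding U_def by blast
    have "u \<in> A" "le u s" using us unfolding principal_def by auto
    have sA: "s \<in> A" using SA s by blast
    have "le z s" using po_trans[OF z \<open>u \<in> A\<close> sA zu \<open>le u s\<close>] .
    have "z \<in> c" using B_down[OF c z uc zu] .
    moreover have "z \<in> dn s" using z \<open>le z s\<close> by (simp add: principal_def)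
    ultimately show "z \<in> U" unfolding U_def using s by blast
  qed
  have KA: "K \<subseteq> A" unfolding K_def principal_def by auto
  have downK: "\<forall>z\<in>A. \<forall>y\<in>K. le z y \<longrightarrow> z \<in> K"
  proof (intro ballI impI)
    fix z y assume z: "z \<in> A" and y: "y \<in> K" and zy: "le z y"
    then have yc: "y \<in> c" and yA: "y \<in> A" and yj: "le y j" by (auto simp: K_def principal_def)
    have "z \<in> c" using B_down[OF c z yc zy] .
    moreover have "le z j" using po_trans[OF z yA jA zy yj] .
    ultimately show "z \<in> K" using z by (simp add: K_def principal_def)
  qed
  have lubT: "\<forall>y\<in>K. is_lub A le {z\<in>A. le z y \<and> z \<in> U} y"
  proof
    fix y assume y: "y \<in> K"
    have yA: "y \<in> A" and yj: "le y j" and yc: "y \<in> c" using y unfolding K_def principal_def by auto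
    have "is_glb A le y j y" unfolding is_glb_def using yA yj po_refl[OF yA] by blast
    then have G: "is_lub A le {m'. \<exists>s\<in>S. is_glb A le y s m'} y"
      using S j yA unfolding admissible_def by blast
    show "is_lub A le {z\<in>A. le z y \<and> z \<in> U} y"
      unfolding is_lub_def
    proof (intro conjI ballI impI)
      show "y \<in> A" by fact
      show "\<And>x. x \<in> {z \<in> A. le z y \<and> z \<in> U} \<Longrightarrow> le x y" by blast
      fix u assume uA: "u \<in> A" and ub: "\<forall>x\<in>{z \<in> A. le z y \<and> z \<in> U}. le x u"
      have "\<forall>m'\<in>{m'. \<exists>s\<in>S. is_glb A le y s m'}. le m' u"
      proof
        fix m' assume "m' \<in> {m'. \<exists>s\<in>S. is_glb A le y s m'}"
        then obtain s where s: "s \<in> S" and g: "is_glb A le y s m'" by blast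
        have m'A: "m' \<in> A" and "le m' y" "le m' s" using g unfolding is_glb_def by auto
        then have "m' \<in> U" unfolding U_def principal_def using s B_down[OF c m'A yc] by blast
        then show "le m' u" using ub m'A \<open>le m' y\<close> by blast
      qed
      then show "le y u" using G uA unfolding is_lub_def by blast
    qed
  qed
  have xK: "x \<in> K" using x unfolding K_def by simp
  have adm: "admissible A le {z\<in>A. le z x \<and> z \<in> U}" using adm_T[OF UA downU KA downK lubT xK] .
  have "{z\<in>A. le z x \<and> z \<in> U} \<subseteq> b" unfolding U_def using ub by blast
  then show "x \<in> b" using D_join[OF B_D[OF b] _ adm] lubT xK by blast
qed

lemma psi_D:
  assumes J: "J \<in> BL B (\<subseteq>)"
  shows "psi J \<in> BL A le"
  unfolding BL_def D_ideal_def is_downset_def mem_Collect_eq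
proof (intro conjI allI ballI impI)
  show "psi J \<subseteq> A" unfolding psi_def by blast
  fix x y assume x: "x \<in> A" and y: "y \<in> psi J" and xy: "le x y"
  then have "dn x \<subseteq> dn y" using dn_mono unfolding psi_def by blast
  then show "x \<in> psi J" using BLB_down[OF J dn_B[OF x]] x y unfolding psi_def by blast
next
  fix S j assume H: "S \<subseteq> psi J \<and> admissible A le S \<and> is_lub A le S j"
  then have SJ: "S \<subseteq> psi J" and S: "admissible A le S" and j: "is_lub A le S j" by auto
  have SA: "S \<subseteq> A" using S unfolding admissible_def by blast
  have jA: "j \<in> A" using j unfolding is_lub_def by blast
  have sj: "\<forall>s\<in>S. dn s \<subseteq> dn j" using dn_mono j SA jA unfolding is_lub_def by blast
  have lubX: "is_lub B (\<subseteq>) (dn ` S) (dn j)"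
    unfolding is_lub_def
  proof (intro conjI ballI impI)
    show "dn j \<in> B" using dn_B jA by blast
    show "\<And>x. x \<in> dn ` S \<Longrightarrow> x \<subseteq> dn j" using sj by auto
    fix c assume c: "c \<in> B" and ub: "\<forall>x\<in>dn ` S. x \<subseteq> c"
    have "S \<subseteq> c"
    proof
      fix s assume s: "s \<in> S"
      then have sA: "s \<in> A" using SA by blast
      have "dn s \<subseteq> c" using ub s by blast
      then show "s \<in> c" using dn_sub_iff[OF sA c] by simp
    qed
    then have "j \<in> c" using D_join[OF B_D[OF c] _ S j] by blast
    then show "dn j \<subseteq> c" using dn_sub_iff[OF jA c] by simp
  qed
  have admX: "admissible B (\<subseteq>) (dn ` S)"
    unfolding admissible_def
  proof (intro conjI ballI allI impI)
    show "dn ` S \<subseteq> B" using dn_B SA by blast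
    show "\<exists>j. is_lub B (\<subseteq>) (dn ` S) j" using lubX by blast
    fix c j' m assume c: "c \<in> B" and H2: "is_lub B (\<subseteq>) (dn ` S) j' \<and> is_glb B (\<subseteq>) c j' m"
    have "j' = dn j" using H2 lubX lub_sub_unique by blast
    then have m: "m = c \<inter> dn j" using H2 glb_B c dn_B jA by blast
    have eq: "{m'. \<exists>s\<in>dn ` S. is_glb B (\<subseteq>) c s m'} = (\<lambda>s. c \<inter> dn s) ` S"
      using glb_B[OF c] dn_B SA by blast
    show "is_lub B (\<subseteq>) {m'. \<exists>s\<in>dn ` S. is_glb B (\<subseteq>) c s m'} m"
      unfolding eq m is_lub_def
    proof (intro conjI ballI impI)
      show "c \<inter> dn j \<in> B" using B_int c dn_B jA by blast
      show "\<And>x. x \<in> (\<lambda>s. c \<inter> dn s) ` S \<Longrightarrow> x \<subseteq> c \<inter> dn j" using sj by auto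
      fix b assume "b \<in> B" "\<forall>x\<in>(\<lambda>s. c \<inter> dn s) ` S. x \<subseteq> b"
      then have bB: "b \<in> B" and "\<forall>s\<in>S. c \<inter> dn s \<subseteq> b" by auto
      then show "c \<inter> dn j \<subseteq> b" using cap_lub[OF S j c bB] by simp
    qed
  qed
  have "dn ` S \<subseteq> J" using SJ unfolding psi_def by blast
  then have "dn j \<in> J" using BLB_join[OF J _ admX lubX] by blast
  then show "j \<in> psi J" using jA unfolding psi_def by blast
qed

lemma phi_D:
  assumes I: "I \<in> BL A le"
  shows "phi I \<in> BL B (\<subseteq>)"
  unfolding BL_def D_ideal_def is_downset_def mem_Collect_eq
proof (intro conjI allI ballI impI)
  have ID: "D_ideal A le I" using I unfolding BL_def by blast
  show "phi I \<subseteq> B" unfolding phi_def by blast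
  show "\<And>x y. x \<in> B \<Longrightarrow> y \<in> phi I \<Longrightarrow> x \<subseteq> y \<Longrightarrow> x \<in> phi I" unfolding phi_def by auto
  fix X k assume H: "X \<subseteq> phi I \<and> admissible B (\<subseteq>) X \<and> is_lub B (\<subseteq>) X k"
  then have XI: "X \<subseteq> phi I" and X: "admissible B (\<subseteq>) X" and k: "is_lub B (\<subseteq>) X k" by auto
  have XB: "X \<subseteq> B" using XI unfolding phi_def by blast
  have kB: "k \<in> B" using k unfolding is_lub_def by blast
  define U where "U = \<Union>X"
  have UA: "U \<subseteq> A" unfolding U_def using XB B_subA by blast
  have downU: "\<forall>z\<in>A. \<forall>u\<in>U. le z u \<longrightarrow> z \<in> U"
    unfolding U_def using XB B_down by blast
  have KA: "k \<subseteq> A" using B_subA kB by blast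
  have downK: "\<forall>z\<in>A. \<forall>y\<in>k. le z y \<longrightarrow> z \<in> k" using B_down kB by blast
  have lubT: "\<forall>y\<in>k. is_lub A le {z\<in>A. le z y \<and> z \<in> U} y"
  proof
    fix y assume y: "y \<in> k"
    have yA: "y \<in> A" using y KA by blast
    show "is_lub A le {z\<in>A. le z y \<and> z \<in> U} y"
      unfolding is_lub_def
    proof (intro conjI ballI impI)
      show "y \<in> A" by fact
      show "\<And>x. x \<in> {z \<in> A. le z y \<and> z \<in> U} \<Longrightarrow> le x y" by blast
      fix u assume uA: "u \<in> A" and ub: "\<forall>x\<in>{z \<in> A. le z y \<and> z \<in> U}. le x u"
      have dyB: "dn y \<in> B" using dn_B[OF yA] .
      have "dn y \<subseteq> k" using dn_sub_iff[OF yA kB] y by simp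
      then have dyk: "dn y \<inter> k = dn y" by (rule Int_absorb2)
      have gl: "is_glb B (\<subseteq>) (dn y) k (dn y \<inter> k)" using glb_B[OF dyB kB] by simp
      have Xa: "\<forall>a\<in>B. \<forall>j m. is_lub B (\<subseteq>) X j \<and> is_glb B (\<subseteq>) a j m \<longrightarrow>
          is_lub B (\<subseteq>) {m'. \<exists>s\<in>X. is_glb B (\<subseteq>) a s m'} m"
        using X unfolding admissible_def by (elim conjE)
      have G: "is_lub B (\<subseteq>) {m'. \<exists>s\<in>X. is_glb B (\<subseteq>) (dn y) s m'} (dn y \<inter> k)"
        using Xa dyB k gl by blast
      have eq: "{m'. \<exists>s\<in>X. is_glb B (\<subseteq>) (dn y) s m'} = (\<lambda>s. dn y \<inter> s) ` X"
      proof (intro equalityI subsetI)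
        fix m' assume "m' \<in> {m'. \<exists>s\<in>X. is_glb B (\<subseteq>) (dn y) s m'}"
        then obtain s where s: "s \<in> X" and g: "is_glb B (\<subseteq>) (dn y) s m'" by blast
        have sB: "s \<in> B" using s XB by blast
        have "m' = dn y \<inter> s" using glb_B[OF dyB sB] g by simp
        then show "m' \<in> (\<lambda>s. dn y \<inter> s) ` X" using s by blast
      next
        fix m' assume "m' \<in> (\<lambda>s. dn y \<inter> s) ` X"
        then obtain s where s: "s \<in> X" and ms: "m' = dn y \<inter> s" by blast
        have sB: "s \<in> B" using s XB by blast
        have "is_glb B (\<subseteq>) (dn y) s m'" using glb_B[OF dyB sB] ms by simp
        then show "m' \<in> {m'. \<exists>s\<in>X. is_glb B (\<subseteq>) (dn y) s m'}" using s by blast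
      qed
      have ub': "\<forall>m'\<in>(\<lambda>s. dn y \<inter> s) ` X. m' \<subseteq> dn u \<inter> dn y"
        using ub unfolding U_def principal_def by blast
      have dnuB: "dn u \<inter> dn y \<in> B" using B_int[OF dn_B[OF uA] dyB] .
      have lst: "\<forall>ya\<in>B. (\<forall>x\<in>(\<lambda>s. dn y \<inter> s) ` X. x \<subseteq> ya) \<longrightarrow> dn y \<inter> k \<subseteq> ya"
        using G unfolding eq is_lub_def by (elim conjE)
      have "dn y \<inter> k \<subseteq> dn u \<inter> dn y" using lst dnuB ub' by blast
      then have "y \<in> dn u" using dyk dn_self[OF yA] by blast
      then show "le y u" unfolding principal_def by blast
    qed
  qed
  have "k \<subseteq> I"
  proof
    fix x assume x: "x \<in> k"
    have adm: "admissible A le {z\<in>A. le z x \<and> z \<in> U}" using adm_T[OF UA downU KA downK lubT x] .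
    have "\<Union>X \<subseteq> I" using XI unfolding phi_def by blast
    then have "{z\<in>A. le z x \<and> z \<in> U} \<subseteq> I" unfolding U_def by blast
    then show "x \<in> I" using D_join[OF ID _ adm] lubT x by blast
  qed
  then show "k \<in> phi I" using kB unfolding phi_def by blast
qed

lemma psi_phi:
  assumes I: "I \<in> BL A le"
  shows "psi (phi I) = I"
proof -
  have ID: "is_downset A le I" using I unfolding BL_def D_ideal_def by blast
  then have IA: "I \<subseteq> A" and Id: "\<forall>x\<in>A. \<forall>y\<in>I. le x y \<longrightarrow> x \<in> I"
    unfolding is_downset_def by auto
  show ?thesis
  proof (intro equalityI subsetI)
    fix a assume "a \<in> psi (phi I)"
    then have aA: "a \<in> A" and "dn a \<in> phi I" unfolding psi_def by auto
    then have "dn a \<subseteq> I" unfolding phi_def by auto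
    then show "a \<in> I" using dn_self[OF aA] by blast
  next
    fix a assume aI: "a \<in> I"
    then have aA: "a \<in> A" using IA by blast
    have "dn a \<subseteq> I"
    proof
      fix x assume "x \<in> dn a"
      then have "x \<in> A" "le x a" by (simp_all add: principal_def)
      then show "x \<in> I" using Id aI by blast
    qed
    then have "dn a \<in> phi I" using dn_B[OF aA] unfolding phi_def by blast
    then show "a \<in> psi (phi I)" using aA unfolding psi_def by blast
  qed
qed

lemma phi_psi:
  assumes J: "J \<in> BL B (\<subseteq>)"
  shows "phi (psi J) = J"
proof (intro equalityI subsetI)
  fix b assume "b \<in> J"
  then have bJ: "b \<in> J" .
  have bB: "b \<in> B" using BLB_sub[OF J] bJ by blast
  have "b \<subseteq> psi J"
  proof
    fix a assume ab: "a \<in> b"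
    have aA: "a \<in> A" using B_subA[OF bB] ab by blast
    have "dn a \<subseteq> b" using dn_sub_iff[OF aA bB] ab by simp
    then have "dn a \<in> J" using BLB_down[OF J dn_B[OF aA] bJ] by simp
    then show "a \<in> psi J" using aA unfolding psi_def by blast
  qed
  then show "b \<in> phi (psi J)" using bB unfolding phi_def by blast
next
  fix b assume "b \<in> phi (psi J)"
  then have b: "b \<in> B" and bJ: "\<forall>a\<in>b. dn a \<in> J" unfolding phi_def psi_def by auto
  have bA: "b \<subseteq> A" using B_subA b by blast
  have lubX: "is_lub B (\<subseteq>) (dn ` b) b"
    unfolding is_lub_def
  proof (intro conjI ballI impI)
    show "b \<in> B" by fact
    fix x assume "x \<in> dn ` b"
    then obtain a where a: "a \<in> b" and xa: "x = dn a" by blast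
    have aA: "a \<in> A" using a bA by blast
    show "x \<subseteq> b" using dn_sub_iff[OF aA b] a xa by simp
  next
    fix c assume c: "c \<in> B" and ub: "\<forall>x\<in>dn ` b. x \<subseteq> c"
    show "b \<subseteq> c"
    proof
      fix a assume a: "a \<in> b"
      have aA: "a \<in> A" using a bA by blast
      have "dn a \<subseteq> c" using ub a by blast
      then show "a \<in> c" using dn_self[OF aA] by blast
    qed
  qed
  have admX: "admissible B (\<subseteq>) (dn ` b)"
    unfolding admissible_def
  proof (intro conjI ballI allI impI)
    show "dn ` b \<subseteq> B" using dn_B bA by blast
    show "\<exists>j. is_lub B (\<subseteq>) (dn ` b) j" using lubX by blast
    fix c j' m assume c: "c \<in> B" and H2: "is_lub B (\<subseteq>) (dn ` b) j' \<and> is_glb B (\<subseteq>) c j' m"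
    have "j' = b" using H2 lubX lub_sub_unique by blast
    then have m: "m = c \<inter> b" using H2 glb_B c b by blast
    have eq: "{m'. \<exists>s\<in>dn ` b. is_glb B (\<subseteq>) c s m'} = (\<lambda>s. c \<inter> dn s) ` b"
      using glb_B[OF c] dn_B bA by blast
    show "is_lub B (\<subseteq>) {m'. \<exists>s\<in>dn ` b. is_glb B (\<subseteq>) c s m'} m"
      unfolding eq m is_lub_def
    proof (intro conjI ballI impI)
      show "c \<inter> b \<in> B" using B_int c b by blast
      fix x assume "x \<in> (\<lambda>s. c \<inter> dn s) ` b"
      then obtain a where a: "a \<in> b" and xa: "x = c \<inter> dn a" by blast
      have aA: "a \<in> A" using a bA by blast
      have "dn a \<subseteq> b" using dn_sub_iff[OF aA b] a by simp
      then show "x \<subseteq> c \<inter> b" using xa by blast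
    next
      fix d assume "d \<in> B" "\<forall>x\<in>(\<lambda>s. c \<inter> dn s) ` b. x \<subseteq> d"
      then show "c \<inter> b \<subseteq> d" using dn_self bA by blast
    qed
  qed
  have "dn ` b \<subseteq> J" using bJ by blast
  then show "b \<in> J" using BLB_join[OF J _ admX lubX] by blast
qed

lemma iso: "order_isomorphic (BL B (\<subseteq>)) (\<subseteq>) (BL A le) (\<subseteq>)"
  unfolding order_isomorphic_def
proof (intro exI conjI ballI)
  show "bij_betw psi (BL B (\<subseteq>)) (BL A le)"
    by (rule bij_betw_byWitness[where f' = phi]) (auto simp: psi_D phi_D psi_phi phi_psi)
  fix x y assume x: "x \<in> BL B (\<subseteq>)" and y: "y \<in> BL B (\<subseteq>)"
  show "x \<subseteq> y \<longleftrightarrow> psi x \<subseteq> psi y"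
  proof
    assume "x \<subseteq> y" then show "psi x \<subseteq> psi y" unfolding psi_def by blast
  next
    assume "psi x \<subseteq> psi y"
    then have "phi (psi x) \<subseteq> phi (psi y)" unfolding phi_def by blast
    then show "x \<subseteq> y" using phi_psi x y by simp
  qed
qed

end

theorem theorem3p5:
  fixes A :: "'a set" and leA :: "'a \<Rightarrow> 'a \<Rightarrow> bool" and B :: "'a set set"
  assumes "meet_semilattice A leA"
    and "sub_meet_semilattice B (\<subseteq>) (principal A leA ` A)"
    and "sub_meet_semilattice (BL A leA) (\<subseteq>) B"
  shows "order_isomorphic (BL B (\<subseteq>)) (\<subseteq>) (BL A leA) (\<subseteq>)"
  using BLsetup.iso[of A leA B] assms unfolding BLsetup_def by blast

end
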